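(* Let $\mathscr M\subset ba(\mathcal A)$. There exists $\lambda\in ba(\mathcal A)$ with $\mathscr M\subset ba(\mathcal A,\lambda)$ if and only if $\mathscr M\subset ba(\mathcal A,m)$ for some $m\in\mathbf A(\mathscr M)$.
   Context: $\mathcal A$ algebra of subsets of $\Omega$; $ba(\mathcal A)$ bounded finitely additive real set functions with $\|\mu\|=|\mu|(\Omega)$. $ba(\mathcal A,\lambda)=\{\mu\in ba(\mathcal A):\mu\ll\lambda\}$, where $\mu\ll\lambda$ means for every $\varepsilon>0$ there is $\delta>0$ with $|\lambda|(A)<\delta\Rightarrow|\mu|(A)<\varepsilon$. $\mathbf A(\mathscr M)=\{\sum_n\alpha_n\frac{|\mu_n|}{1\vee\|\mu_n\|}:\mu_n\in\mathscr M,\ \alpha_n\ge0,\ \sum_n\alpha_n=1\}$. *)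

theory Defs
  imports "HOL-Analysis.Analysis"
begin

text \<open>Set functions are represented as total functions \<open>'a set \<Rightarrow> real\<close>;
  elements of ba are normalised to vanish outside the algebra.\<close>

definition fin_additive :: "'a set set \<Rightarrow> ('a set \<Rightarrow> real) \<Rightarrow> bool" where
  "fin_additive \<A> \<mu> \<longleftrightarrow> \<mu> {} = 0 \<and>
     (\<forall>A\<in>\<A>. \<forall>B\<in>\<A>. A \<inter> B = {} \<longrightarrow> \<mu> (A \<union> B) = \<mu> A + \<mu> B)"

definition tvar :: "'a set set \<Rightarrow> ('a set \<Rightarrow> real) \<Rightarrow> 'a set \<Rightarrow> real" where
  "tvar \<A> \<mu> A = (if A \<in> \<A> then
     Sup {(\<Sum>B\<in>P. \<bar>\<mu> B\<bar>) | P. finite P \<and> P \<subseteq> \<A> \<and> disjoint P \<and> \<Union>P = A}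
   else 0)"

definition ba :: "'a set \<Rightarrow> 'a set set \<Rightarrow> ('a set \<Rightarrow> real) set" where
  "ba \<Omega> \<A> = {\<mu>. fin_additive \<A> \<mu> \<and> (\<exists>c. \<forall>A\<in>\<A>. \<bar>\<mu> A\<bar> \<le> c)
                  \<and> (\<forall>A. A \<notin> \<A> \<longrightarrow> \<mu> A = 0)}"

definition ba_norm :: "'a set \<Rightarrow> 'a set set \<Rightarrow> ('a set \<Rightarrow> real) \<Rightarrow> real" where
  "ba_norm \<Omega> \<A> \<mu> = tvar \<A> \<mu> \<Omega>"

definition abs_cont :: "'a set set \<Rightarrow> ('a set \<Rightarrow> real) \<Rightarrow> ('a set \<Rightarrow> real) \<Rightarrow> bool" where
  "abs_cont \<A> \<mu> lam \<longleftrightarrow> (\<forall>\<epsilon>>0. \<exists>\<delta>>0. \<forall>A\<in>\<A>. tvar \<A> lam A < \<delta> \<longrightarrow> tvar \<A> \<mu> A < \<epsilon>)"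

definition ba_ac :: "'a set \<Rightarrow> 'a set set \<Rightarrow> ('a set \<Rightarrow> real) \<Rightarrow> ('a set \<Rightarrow> real) set" where
  "ba_ac \<Omega> \<A> lam = {\<mu> \<in> ba \<Omega> \<A>. abs_cont \<A> \<mu> lam}"

definition convA :: "'a set \<Rightarrow> 'a set set \<Rightarrow> ('a set \<Rightarrow> real) set \<Rightarrow> ('a set \<Rightarrow> real) set" where
  "convA \<Omega> \<A> \<M> = {(%A. if A \<in> \<A> then
        (\<Sum>n. \<alpha> n * tvar \<A> (\<mu> n) A / max 1 (ba_norm \<Omega> \<A> (\<mu> n))) else 0)
      | \<mu> \<alpha>. (\<forall>n. \<mu> n \<in> \<M>) \<and> (\<forall>n. \<alpha> n \<ge> 0) \<and> \<alpha> sums 1}"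

end

theory Submission
  imports Defs "HOL-Library.Nat_Bijection"
begin


context algebra begin

lemma fa_Union:
  assumes fa: "fin_additive M \<mu>"
  shows "finite P \<Longrightarrow> P \<subseteq> M \<Longrightarrow> disjoint P \<Longrightarrow> \<mu> (\<Union>P) = (\<Sum>B\<in>P. \<mu> B)"
proof (induction P rule: finite_induct)
  case empty
  then show ?case using fa by (simp add: fin_additive_def)
next
  case (insert B P)
  have d: "disjoint P" using insert.prems(2) by (simp add: pairwise_insert)
  have BP: "B \<inter> \<Union>P = {}" using insert.prems(2) insert.hyps(2)
    by (auto simp: pairwise_insert disjnt_def)
  have "\<Union>P \<in> M" using insert by auto
  then have "\<mu> (B \<union> \<Union>P) = \<mu> B + \<mu> (\<Union>P)" using fa BP insert.prems(1)
    by (auto simp: fin_additive_def)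
  then show ?case using insert d by simp
qed

definition PS :: "('a set \<Rightarrow> real) \<Rightarrow> 'a set \<Rightarrow> real set" where
  "PS \<mu> A = {(\<Sum>B\<in>P. \<bar>\<mu> B\<bar>) | P. finite P \<and> P \<subseteq> M \<and> disjoint P \<and> \<Union>P = A}"

lemma tvar_PS: "A \<in> M \<Longrightarrow> tvar M \<mu> A = Sup (PS \<mu> A)"
  by (simp add: tvar_def PS_def)

lemma ba_bound:
  assumes mu: "\<mu> \<in> ba \<Omega> M"
  obtains c where "\<And>P. finite P \<Longrightarrow> P \<subseteq> M \<Longrightarrow> disjoint P \<Longrightarrow> (\<Sum>B\<in>P. \<bar>\<mu> B\<bar>) \<le> c"
proof -
  from mu obtain c where c: "\<forall>A\<in>M. \<bar>\<mu> A\<bar> \<le> c" and fa: "fin_additive M \<mu>"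
    by (auto simp: ba_def)
  have *: "(\<Sum>B\<in>P. \<bar>\<mu> B\<bar>) \<le> 2*c" if P: "finite P" "P \<subseteq> M" "disjoint P" for P
  proof -
    define P1 where "P1 = {B\<in>P. \<mu> B \<ge> 0}"
    define P2 where "P2 = {B\<in>P. \<mu> B < 0}"
    have f: "finite P1" "finite P2" using P by (auto simp: P1_def P2_def)
    have s: "P1 \<subseteq> M" "P2 \<subseteq> M" using P by (auto simp: P1_def P2_def)
    have d: "disjoint P1" "disjoint P2" using P(3) by (auto simp: P1_def P2_def intro: pairwise_subset)
    have "P = P1 \<union> P2" "P1 \<inter> P2 = {}" by (auto simp: P1_def P2_def)
    then have "(\<Sum>B\<in>P. \<bar>\<mu> B\<bar>) = (\<Sum>B\<in>P1. \<bar>\<mu> B\<bar>) + (\<Sum>B\<in>P2. \<bar>\<mu> B\<bar>)"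
      using f by (metis sum.union_disjoint)
    also have "(\<Sum>B\<in>P1. \<bar>\<mu> B\<bar>) = (\<Sum>B\<in>P1. \<mu> B)" by (auto simp: P1_def)
    also have "\<dots> = \<mu> (\<Union>P1)" using fa_Union[OF fa f(1) s(1) d(1)] by simp
    also have "(\<Sum>B\<in>P2. \<bar>\<mu> B\<bar>) = - (\<Sum>B\<in>P2. \<mu> B)" by (auto simp: P2_def sum_negf[symmetric])
    also have "(\<Sum>B\<in>P2. \<mu> B) = \<mu> (\<Union>P2)" using fa_Union[OF fa f(2) s(2) d(2)] by simp
    finally have eq: "(\<Sum>B\<in>P. \<bar>\<mu> B\<bar>) = \<mu> (\<Union>P1) + - \<mu> (\<Union>P2)" .
    have "\<Union>P1 \<in> M" "\<Union>P2 \<in> M" using f s by auto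
    then have "\<mu>(\<Union>P1) \<le> c" "- \<mu>(\<Union>P2) \<le> c" using c by (auto simp: abs_le_iff)
    then show ?thesis using eq by linarith
  qed
  show ?thesis by (rule that) (rule *)
qed

context
  fixes \<mu> assumes mu: "\<mu> \<in> ba \<Omega> M"
begin

lemma PS_bdd: "bdd_above (PS \<mu> A)"
proof -
  obtain c where c: "\<And>P. finite P \<Longrightarrow> P \<subseteq> M \<Longrightarrow> disjoint P \<Longrightarrow> (\<Sum>B\<in>P. \<bar>\<mu> B\<bar>) \<le> c"
    using ba_bound[OF mu] by blast
  show ?thesis unfolding bdd_above_def
  proof (intro exI ballI)
    fix x assume "x \<in> PS \<mu> A"
    then obtain P where "finite P" "P \<subseteq> M" "disjoint P" "x = (\<Sum>B\<in>P. \<bar>\<mu> B\<bar>)"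
      unfolding PS_def by blast
    then show "x \<le> c" using c by blast
  qed
qed

lemma PS_single: "A \<in> M \<Longrightarrow> \<bar>\<mu> A\<bar> \<in> PS \<mu> A"
  unfolding PS_def by (rule CollectI, rule exI[of _ "{A}"]) auto

lemma tvar_upper: "A \<in> M \<Longrightarrow> x \<in> PS \<mu> A \<Longrightarrow> x \<le> tvar M \<mu> A"
  using PS_bdd by (simp add: tvar_PS cSup_upper)

lemma tvar_ge: "A \<in> M \<Longrightarrow> \<bar>\<mu> A\<bar> \<le> tvar M \<mu> A"
  using tvar_upper PS_single by blast

lemma tvar_nn: "0 \<le> tvar M \<mu> A"
proof (cases "A \<in> M")
  case True then show ?thesis using tvar_ge[OF True] by linarith
qed (simp add: tvar_def)

lemma tvar_least:
  assumes "A \<in> M" "\<And>P. finite P \<Longrightarrow> P \<subseteq> M \<Longrightarrow> disjoint P \<Longrightarrow> \<Union>P = A \<Longrightarrow> (\<Sum>B\<in>P. \<bar>\<mu> B\<bar>) \<le> t"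
  shows "tvar M \<mu> A \<le> t"
  unfolding tvar_PS[OF assms(1)]
proof (rule cSup_least)
  show "PS \<mu> A \<noteq> {}" using PS_single[OF assms(1)] by blast
  fix x assume "x \<in> PS \<mu> A"
  then obtain P where "finite P" "P \<subseteq> M" "disjoint P" "\<Union>P = A" "x = (\<Sum>B\<in>P. \<bar>\<mu> B\<bar>)"
    unfolding PS_def by blast
  then show "x \<le> t" using assms(2) by blast
qed

end
end


context algebra begin
context
  fixes \<mu> assumes mu: "\<mu> \<in> ba \<Omega> M"
begin

lemma mu_fa: "fin_additive M \<mu>" using mu by (simp add: ba_def)
lemma mu_empty: "\<mu> {} = 0" using mu_fa by (simp add: fin_additive_def)

lemma PS_union:
  assumes A: "A \<in> M" and B: "B \<in> M" and AB: "A \<inter> B = {}"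
    and x: "x \<in> PS \<mu> A" and y: "y \<in> PS \<mu> B"
  shows "x + y \<in> PS \<mu> (A \<union> B)"
proof -
  obtain P where P: "finite P" "P \<subseteq> M" "disjoint P" "\<Union>P = A" "x = (\<Sum>C\<in>P. \<bar>\<mu> C\<bar>)"
    using x unfolding PS_def by blast
  obtain Q where Q: "finite Q" "Q \<subseteq> M" "disjoint Q" "\<Union>Q = B" "y = (\<Sum>C\<in>Q. \<bar>\<mu> C\<bar>)"
    using y unfolding PS_def by blast
  have PQ: "\<And>C. C \<in> P \<inter> Q \<Longrightarrow> C = {}"
    using P(4) Q(4) AB by blast
  have z: "(\<Sum>C\<in>P \<inter> Q. \<bar>\<mu> C\<bar>) = 0"
    by (rule sum.neutral) (use PQ mu_empty in auto)
  have s: "(\<Sum>C\<in>P \<union> Q. \<bar>\<mu> C\<bar>) = x + y"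
    using sum.union_inter[OF P(1) Q(1), of "\<lambda>C. \<bar>\<mu> C\<bar>"] z P(5) Q(5) by simp
  have d: "disjoint (P \<union> Q)"
    unfolding pairwise_def disjnt_def
  proof (intro ballI impI)
    fix C D assume C: "C \<in> P \<union> Q" and D: "D \<in> P \<union> Q" and ne: "C \<noteq> D"
    show "C \<inter> D = {}"
    proof (cases "C \<in> P")
      case True
      show ?thesis
      proof (cases "D \<in> P")
        case True2: True
        then show ?thesis using P(3) True ne by (auto simp: pairwise_def disjnt_def)
      next
        case False
        then have "D \<in> Q" using D by auto
        then show ?thesis using True P(4) Q(4) AB by blast
      qed
    next
      case False
      then have CQ: "C \<in> Q" using C by auto
      show ?thesis
      proof (cases "D \<in> P")
        case True
        then show ?thesis using CQ P(4) Q(4) AB by blast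
      next
        case False
        then have "D \<in> Q" using D by auto
        then show ?thesis using Q(3) CQ ne by (auto simp: pairwise_def disjnt_def)
      qed
    qed
  qed
  show ?thesis unfolding PS_def
    using P Q d s[symmetric] by (intro CollectI exI[of _ "P \<union> Q"]) auto
qed

lemma tvar_superadd:
  assumes A: "A \<in> M" and B: "B \<in> M" and AB: "A \<inter> B = {}"
  shows "tvar M \<mu> A + tvar M \<mu> B \<le> tvar M \<mu> (A \<union> B)"
proof -
  have AuB: "A \<union> B \<in> M" using A B by auto
  have 1: "tvar M \<mu> A \<le> tvar M \<mu> (A \<union> B) - y" if y: "y \<in> PS \<mu> B" for y
  proof (rule tvar_least[OF mu A])
    fix P assume "finite P" "P \<subseteq> M" "disjoint P" "\<Union>P = A"
    then have "(\<Sum>C\<in>P. \<bar>\<mu> C\<bar>) \<in> PS \<mu> A" unfolding PS_def by blast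
    then have "(\<Sum>C\<in>P. \<bar>\<mu> C\<bar>) + y \<le> tvar M \<mu> (A \<union> B)"
      using PS_union[OF A B AB _ y] tvar_upper[OF mu AuB] by blast
    then show "(\<Sum>C\<in>P. \<bar>\<mu> C\<bar>) \<le> tvar M \<mu> (A \<union> B) - y" by linarith
  qed
  have "tvar M \<mu> B \<le> tvar M \<mu> (A \<union> B) - tvar M \<mu> A"
  proof (rule tvar_least[OF mu B])
    fix P assume "finite P" "P \<subseteq> M" "disjoint P" "\<Union>P = B"
    then have "(\<Sum>C\<in>P. \<bar>\<mu> C\<bar>) \<in> PS \<mu> B" unfolding PS_def by blast
    from 1[OF this] show "(\<Sum>C\<in>P. \<bar>\<mu> C\<bar>) \<le> tvar M \<mu> (A \<union> B) - tvar M \<mu> A" by linarith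
  qed
  then show ?thesis by linarith
qed

lemma restrict_PS:
  assumes R: "finite R" "R \<subseteq> M" "disjoint R" and A: "A \<in> M" "A \<subseteq> \<Union>R"
  shows "(\<Sum>C\<in>R. \<bar>\<mu> (C \<inter> A)\<bar>) \<in> PS \<mu> A"
proof -
  let ?h = "\<lambda>C. C \<inter> A"
  have eq: "(\<Sum>D\<in>?h ` R. \<bar>\<mu> D\<bar>) = (\<Sum>C\<in>R. \<bar>\<mu> (C \<inter> A)\<bar>)"
  proof (subst sum.reindex_nontrivial[OF R(1)])
    fix x y assume "x \<in> R" "y \<in> R" "x \<noteq> y" "?h x = ?h y"
    then have "?h x = {}" using R(3) by (auto simp: pairwise_def disjnt_def)
    then show "\<bar>\<mu> (?h x)\<bar> = 0" using mu_empty by simp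
  qed (simp add: o_def)
  have "finite (?h ` R)" "?h ` R \<subseteq> M" using R A by auto
  moreover have "disjoint (?h ` R)"
    using R(3) by (auto simp: pairwise_def disjnt_def)
  moreover have "\<Union>(?h ` R) = A" using A by auto
  ultimately show ?thesis unfolding PS_def using eq[symmetric] by blast
qed

lemma tvar_subadd:
  assumes A: "A \<in> M" and B: "B \<in> M" and AB: "A \<inter> B = {}"
  shows "tvar M \<mu> (A \<union> B) \<le> tvar M \<mu> A + tvar M \<mu> B"
proof (rule tvar_least[OF mu])
  show "A \<union> B \<in> M" using A B by auto
  fix R assume R: "finite R" "R \<subseteq> M" "disjoint R" "\<Union>R = A \<union> B"
  have pt: "\<bar>\<mu> C\<bar> \<le> \<bar>\<mu> (C \<inter> A)\<bar> + \<bar>\<mu> (C \<inter> B)\<bar>" if C: "C \<in> R" for C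
  proof -
    have CM: "C \<in> M" using C R by auto
    have "C = (C \<inter> A) \<union> (C \<inter> B)" using C R(4) by auto
    moreover have "\<mu> ((C \<inter> A) \<union> (C \<inter> B)) = \<mu> (C \<inter> A) + \<mu> (C \<inter> B)"
      using mu_fa CM A B AB unfolding fin_additive_def by (metis Int Int_assoc Int_commute Int_empty_right Int_left_commute)
    ultimately show ?thesis by (metis abs_triangle_ineq)
  qed
  have "(\<Sum>C\<in>R. \<bar>\<mu> C\<bar>) \<le> (\<Sum>C\<in>R. \<bar>\<mu> (C \<inter> A)\<bar>) + (\<Sum>C\<in>R. \<bar>\<mu> (C \<inter> B)\<bar>)"
    using pt by (simp add: sum.distrib[symmetric] sum_mono)
  also have "\<dots> \<le> tvar M \<mu> A + tvar M \<mu> B"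
    using restrict_PS[OF R(1-3) A] restrict_PS[OF R(1-3) B] R(4) tvar_upper[OF mu A] tvar_upper[OF mu B]
    by (intro add_mono) auto
  finally show "(\<Sum>C\<in>R. \<bar>\<mu> C\<bar>) \<le> tvar M \<mu> A + tvar M \<mu> B" .
qed

lemma tvar_add:
  "A \<in> M \<Longrightarrow> B \<in> M \<Longrightarrow> A \<inter> B = {} \<Longrightarrow> tvar M \<mu> (A \<union> B) = tvar M \<mu> A + tvar M \<mu> B"
  using tvar_subadd tvar_superadd by (meson order_antisym)

lemma tvar_empty: "tvar M \<mu> {} = 0"
  using tvar_add[of "{}" "{}"] by simp

lemma tvar_mono: "A \<in> M \<Longrightarrow> B \<in> M \<Longrightarrow> A \<subseteq> B \<Longrightarrow> tvar M \<mu> A \<le> tvar M \<mu> B"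
  using tvar_add[of A "B - A"] tvar_nn[OF mu, of "B - A"] by (simp add: Un_absorb1 Diff)

lemma tvar_le_norm: "A \<in> M \<Longrightarrow> tvar M \<mu> A \<le> ba_norm \<Omega> M \<mu>"
  unfolding ba_norm_def using tvar_mono sets_into_space top by blast

end
end



lemma double_sums:
  fixes f :: "nat \<times> nat \<Rightarrow> real"
  assumes nn: "\<And>p. f p \<ge> 0" and inner: "\<And>k. (\<lambda>n. f (k,n)) sums g k" and outer: "g sums G"
  shows "(\<lambda>j. f (prod_decode j)) sums G"
proof -
  have i: "\<And>k. ((\<lambda>n. f (k,n)) has_sum g k) UNIV"
    using inner nn by (intro sums_nonneg_imp_has_sum) auto
  have gnn: "\<And>k. g k \<ge> 0" using i nn by (meson has_sum_nonneg)  
  have o: "(g has_sum G) UNIV" using outer gnn by (intro sums_nonneg_imp_has_sum) auto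
  have "f summable_on Sigma UNIV (\<lambda>_. UNIV)"
    by (rule summable_on_SigmaI[OF i]) (use o nn in \<open>auto intro: has_sum_imp_summable\<close>)
  then have "(f has_sum G) (Sigma UNIV (\<lambda>_. UNIV))"
    by (rule has_sum_SigmaI[OF i o])
  then have "(f has_sum G) UNIV" by simp
  then have "((\<lambda>j. f (prod_decode j)) has_sum G) UNIV"
    using has_sum_reindex_bij_betw[OF bij_prod_decode] by blast
  then show ?thesis by (rule has_sum_imp_sums)
qed

lemma sums_delta: "(\<lambda>n::nat. (if n = 0 then 1 else 0) * (x::real)) sums x"
proof -
  have e: "(\<lambda>n::nat. (if n = 0 then 1 else 0) * x) = (\<lambda>n. if n = 0 then x else 0)" by (rule ext) simp
  have "(\<lambda>n::nat. if n = 0 then x else 0) sums x" using sums_single[of 0 "\<lambda>_. x"] by simp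
  then show ?thesis unfolding e .
qed
lemma sums_delta1: "(\<lambda>n::nat. if n = 0 then 1 else 0) sums (1::real)"
  using sums_delta[of 1] by simp

definition nu :: "'a set set \<Rightarrow> 'a set \<Rightarrow> ('a set \<Rightarrow> real) \<Rightarrow> 'a set \<Rightarrow> real" where
  "nu M \<Omega> \<mu> A = tvar M \<mu> A / max 1 (ba_norm \<Omega> M \<mu>)"

context algebra begin

lemma nu_nn: "\<mu> \<in> ba \<Omega> M \<Longrightarrow> 0 \<le> nu M \<Omega> \<mu> A"
  unfolding nu_def using tvar_nn by simp

lemma nu_le1: "\<mu> \<in> ba \<Omega> M \<Longrightarrow> nu M \<Omega> \<mu> A \<le> 1"
proof (cases "A \<in> M")
  case True
  assume mu: "\<mu> \<in> ba \<Omega> M"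
  have "tvar M \<mu> A \<le> max 1 (ba_norm \<Omega> M \<mu>)" using tvar_le_norm[OF mu True] by linarith
  then show ?thesis unfolding nu_def by simp
qed (simp add: nu_def tvar_def)

lemma nu_add: "\<mu> \<in> ba \<Omega> M \<Longrightarrow> A \<in> M \<Longrightarrow> B \<in> M \<Longrightarrow> A \<inter> B = {} \<Longrightarrow>
   nu M \<Omega> \<mu> (A \<union> B) = nu M \<Omega> \<mu> A + nu M \<Omega> \<mu> B"
  unfolding nu_def using tvar_add by (simp add: add_divide_distrib)

lemma convA_D:
  assumes "m \<in> convA \<Omega> M MM"
  obtains \<mu> \<alpha> where "\<And>n. \<mu> n \<in> MM" "\<And>n. \<alpha> n \<ge> 0" "\<alpha> sums 1"
    "\<And>A. A \<in> M \<Longrightarrow> m A = (\<Sum>n. \<alpha> n * nu M \<Omega> (\<mu> n) A)" "\<And>A. A \<notin> M \<Longrightarrow> m A = 0"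
proof -
  from assms obtain \<mu> \<alpha> where e: "m = (\<lambda>A. if A \<in> M then
        (\<Sum>n. \<alpha> n * tvar M (\<mu> n) A / max 1 (ba_norm \<Omega> M (\<mu> n))) else 0)"
     and h: "\<forall>n. \<mu> n \<in> MM" "\<forall>n. \<alpha> n \<ge> 0" "\<alpha> sums 1"
    unfolding convA_def by blast
  show ?thesis
    by (rule that[of \<mu> \<alpha>]) (use h in \<open>auto simp: e nu_def times_divide_eq_right\<close>)
qed

lemma convA_I:
  assumes "\<And>n. \<mu> n \<in> MM" "\<And>n. \<alpha> n \<ge> 0" "\<alpha> sums 1"
    "\<And>A. A \<in> M \<Longrightarrow> m A = (\<Sum>n. \<alpha> n * nu M \<Omega> (\<mu> n) A)" "\<And>A. A \<notin> M \<Longrightarrow> m A = 0"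
  shows "m \<in> convA \<Omega> M MM"
proof -
  have "m = (\<lambda>A. if A \<in> M then (\<Sum>n. \<alpha> n * tvar M (\<mu> n) A / max 1 (ba_norm \<Omega> M (\<mu> n))) else 0)"
    using assms(4,5) by (auto simp: nu_def times_divide_eq_right)
  then show ?thesis unfolding convA_def using assms(1-3) by blast
qed

context fixes MM assumes MM: "MM \<subseteq> ba \<Omega> M"
begin

lemma series_sums:
  assumes "\<And>n. \<mu> n \<in> MM" "\<And>n. \<alpha> n \<ge> 0" "\<alpha> sums 1"
  shows "(\<lambda>n. \<alpha> n * nu M \<Omega> (\<mu> n) A) sums (\<Sum>n. \<alpha> n * nu M \<Omega> (\<mu> n) A)"
proof -
  have b: "\<mu> n \<in> ba \<Omega> M" for n using assms(1) MM by auto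
  have "summable (\<lambda>n. \<alpha> n * nu M \<Omega> (\<mu> n) A)"
  proof (rule summable_comparison_test[of _ \<alpha>])
    show "\<exists>N. \<forall>n\<ge>N. norm (\<alpha> n * nu M \<Omega> (\<mu> n) A) \<le> \<alpha> n"
      using nu_nn[OF b] nu_le1[OF b] assms(2)
      by (intro exI[of _ 0] allI impI) (simp add: abs_mult mult_left_le)
    show "summable \<alpha>" using assms(3) by (auto simp: sums_iff)
  qed
  then show ?thesis by (simp add: summable_sums)
qed

lemma convA_props:
  fixes m :: "'a set \<Rightarrow> real"
  assumes m: "m \<in> convA \<Omega> M MM"
  shows "\<And>A. 0 \<le> m A" "\<And>A. m A \<le> 1" "fin_additive M m" "m \<in> ba \<Omega> M"
proof -
  obtain \<mu> \<alpha> where mu: "\<And>n. \<mu> n \<in> MM" and al: "\<And>n. \<alpha> n \<ge> 0" "\<alpha> sums 1"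
    and mA: "\<And>A. A \<in> M \<Longrightarrow> m A = (\<Sum>n. \<alpha> n * nu M \<Omega> (\<mu> n) A)" and m0: "\<And>A. A \<notin> M \<Longrightarrow> m A = 0"
    using convA_D[OF m] by blast
  have b: "\<mu> n \<in> ba \<Omega> M" for n using mu MM by auto
  note S = series_sums[OF mu al]
  show nn: "0 \<le> m A" for A
  proof (cases "A \<in> M")
    case True
    show ?thesis unfolding mA[OF True]
      by (rule sums_le[OF _ sums_zero S]) (simp add: al nu_nn[OF b])
  qed (simp add: m0)
  show le1: "m A \<le> 1" for A
  proof (cases "A \<in> M")
    case True
    show ?thesis unfolding mA[OF True]
      by (rule sums_le[OF _ S al(2)]) (simp add: al nu_le1[OF b] mult_left_le)
  qed (simp add: m0)
  show fa: "fin_additive M m"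
    unfolding fin_additive_def
  proof (intro conjI ballI impI)
    show "m {} = 0" using mA[OF empty_sets] tvar_empty[OF b] by (simp add: nu_def)
    fix A B assume A: "A \<in> M" and B: "B \<in> M" and AB: "A \<inter> B = {}"
    have "(\<lambda>n. \<alpha> n * nu M \<Omega> (\<mu> n) (A \<union> B)) sums (m A + m B)"
      using sums_add[OF S[where A=A] S[where A=B]] nu_add[OF b A B AB] mA[OF A] mA[OF B]
      by (simp add: distrib_left)
    moreover have "A \<union> B \<in> M" using A B by auto
    ultimately show "m (A \<union> B) = m A + m B" using mA by (simp add: sums_iff)
  qed
  show "m \<in> ba \<Omega> M" unfolding ba_def using fa le1 nn m0
    by (auto intro!: exI[of _ 1])
qed

lemma tvar_pos:
  assumes m: "m \<in> ba \<Omega> M" and nn: "\<And>A. 0 \<le> m A" and A: "A \<in> M"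
  shows "tvar M m A = m A"
proof (rule order_antisym)
  show "m A \<le> tvar M m A" using tvar_ge[OF m A] by simp
  show "tvar M m A \<le> m A"
  proof (rule tvar_least[OF m A])
    fix P assume P: "finite P" "P \<subseteq> M" "disjoint P" "\<Union> P = A"
    have "(\<Sum>B\<in>P. \<bar>m B\<bar>) = (\<Sum>B\<in>P. m B)" using nn by simp
    also have "\<dots> = m A" using fa_Union[OF mu_fa[OF m] P(1-3)] P(4) by simp
    finally show "(\<Sum>B\<in>P. \<bar>m B\<bar>) \<le> m A" by simp
  qed
qed

lemma convA_comb:
  assumes mk: "\<And>k. m k \<in> convA \<Omega> M MM" and be: "\<And>k. \<beta> k \<ge> 0" "\<beta> sums 1"
  shows "(\<lambda>A. if A \<in> M then (\<Sum>k. \<beta> k * m k A) else 0) \<in> convA \<Omega> M MM"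
    and "\<And>A. A \<in> M \<Longrightarrow> (\<lambda>k. \<beta> k * m k A) sums (\<Sum>k. \<beta> k * m k A)"
proof -
  have "\<forall>k. \<exists>p. (\<forall>n. fst p n \<in> MM) \<and> (\<forall>n. snd p n \<ge> 0) \<and> snd p sums 1 \<and>
     (\<forall>A\<in>M. m k A = (\<Sum>n. snd p n * nu M \<Omega> (fst p n) A))"
  proof
    fix k
    obtain \<mu> \<alpha> where "\<And>n. \<mu> n \<in> MM" "\<And>n. \<alpha> n \<ge> 0" "\<alpha> sums 1"
    "\<And>A. A \<in> M \<Longrightarrow> m k A = (\<Sum>n. \<alpha> n * nu M \<Omega> (\<mu> n) A)" "\<And>A. A \<notin> M \<Longrightarrow> m k A = 0"
      by (rule convA_D[OF mk[of k]]) (rule that)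
    then show "\<exists>p. (\<forall>n. fst p n \<in> MM) \<and> (\<forall>n. snd p n \<ge> 0) \<and> snd p sums 1 \<and>
     (\<forall>A\<in>M. m k A = (\<Sum>n. snd p n * nu M \<Omega> (fst p n) A))"
      by (intro exI[of _ "(\<mu>, \<alpha>)"]) auto
  qed
  from choice[OF this] obtain F where F0: "\<forall>k. (\<forall>n. fst (F k) n \<in> MM) \<and> (\<forall>n. snd (F k) n \<ge> 0) \<and> snd (F k) sums 1 \<and>
     (\<forall>A\<in>M. m k A = (\<Sum>n. snd (F k) n * nu M \<Omega> (fst (F k) n) A))" by blast
  have F: "\<And>k n. fst (F k) n \<in> MM" "\<And>k n. snd (F k) n \<ge> 0" "\<And>k. snd (F k) sums 1"
    "\<And>k A. A \<in> M \<Longrightarrow> m k A = (\<Sum>n. snd (F k) n * nu M \<Omega> (fst (F k) n) A)"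
    using F0 by blast+
  define MU where "MU k = fst (F k)" for k
  define AL where "AL k = snd (F k)" for k
  have bMU: "MU k n \<in> ba \<Omega> M" for k n using F(1) MM by (auto simp: MU_def)
  define \<mu>' where "\<mu>' j = (case prod_decode j of (k, n) \<Rightarrow> MU k n)" for j
  define \<alpha>' where "\<alpha>' j = (case prod_decode j of (k, n) \<Rightarrow> \<beta> k * AL k n)" for j
  have mkprops: "0 \<le> m k A" "m k A \<le> 1" for k A using convA_props[OF mk] by auto
  have sb: "(\<lambda>k. \<beta> k * m k A) sums (\<Sum>k. \<beta> k * m k A)" for A
  proof -
    have "summable (\<lambda>k. \<beta> k * m k A)"
    proof (rule summable_comparison_test[of _ \<beta>])
      show "\<exists>N. \<forall>n\<ge>N. norm (\<beta> n * m n A) \<le> \<beta> n"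
        using mkprops be(1) by (intro exI[of _ 0] allI impI) (simp add: abs_mult mult_left_le)
      show "summable \<beta>" using be(2) by (auto simp: sums_iff)
    qed
    then show ?thesis by (simp add: summable_sums)
  qed
  then show "\<And>A. A \<in> M \<Longrightarrow> (\<lambda>k. \<beta> k * m k A) sums (\<Sum>k. \<beta> k * m k A)" by blast
  have a1: "\<alpha>' sums 1"
  proof -
    have "(\<lambda>j. (\<lambda>(k,n). \<beta> k * AL k n) (prod_decode j)) sums 1"
    proof (rule double_sums[where g = \<beta>])
      show "(\<lambda>n. (\<lambda>(k,n). \<beta> k * AL k n) (k, n)) sums \<beta> k" for k
        using sums_mult[OF F(3)[of k], of "\<beta> k"] by (simp add: AL_def)
      show "0 \<le> (\<lambda>(k,n). \<beta> k * AL k n) p" for p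
        using be(1) F(2) by (simp add: AL_def case_prod_unfold)
    qed (rule be(2))
    moreover have "\<alpha>' = (\<lambda>j. (\<lambda>(k,n). \<beta> k * AL k n) (prod_decode j))"
      by (rule ext) (simp add: \<alpha>'_def)
    ultimately show ?thesis by simp
  qed
  have a0: "\<alpha>' j \<ge> 0" for j using be F(2) by (simp add: \<alpha>'_def AL_def case_prod_unfold)
  have val: "(\<Sum>k. \<beta> k * m k A) = (\<Sum>j. \<alpha>' j * nu M \<Omega> (\<mu>' j) A)" if A: "A \<in> M" for A
  proof -
    have "(\<lambda>j. (\<lambda>(k,n). \<beta> k * (AL k n * nu M \<Omega> (MU k n) A)) (prod_decode j)) sums (\<Sum>k. \<beta> k * m k A)"
    proof (rule double_sums[where g = "\<lambda>k. \<beta> k * m k A"])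
      show "0 \<le> (\<lambda>(k,n). \<beta> k * (AL k n * nu M \<Omega> (MU k n) A)) p" for p
        using be(1) F(2) nu_nn[OF bMU] by (auto simp: AL_def case_prod_unfold)
      show "(\<lambda>n. (\<lambda>(k,n). \<beta> k * (AL k n * nu M \<Omega> (MU k n) A)) (k, n)) sums (\<beta> k * m k A)" for k
        using sums_mult[OF series_sums[OF F(1)[of k] F(2)[of k] F(3)[of k], where A=A], of "\<beta> k"] F(4)[OF A, of k]
        by (simp add: AL_def MU_def)
      show "(\<lambda>k. \<beta> k * m k A) sums (\<Sum>k. \<beta> k * m k A)" by (rule sb)
    qed
    moreover have "(\<lambda>j. \<alpha>' j * nu M \<Omega> (\<mu>' j) A) = (\<lambda>j. (\<lambda>(k,n). \<beta> k * (AL k n * nu M \<Omega> (MU k n) A)) (prod_decode j))"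
      by (rule ext) (simp add: \<alpha>'_def \<mu>'_def case_prod_unfold mult.assoc)
    ultimately show ?thesis by (simp add: sums_iff)
  qed
  have "\<mu>' j \<in> MM" for j using F(1) by (simp add: \<mu>'_def MU_def case_prod_unfold)
  then show "(\<lambda>A. if A \<in> M then (\<Sum>k. \<beta> k * m k A) else 0) \<in> convA \<Omega> M MM"
    using a0 a1 val by (intro convA_I[where \<mu> = \<mu>' and \<alpha> = \<alpha>']) auto
qed

end
end



context algebra begin
context fixes MM assumes MM: "MM \<subseteq> ba \<Omega> M"
begin

lemma single_convA:
  assumes mu: "\<mu> \<in> MM"
  shows "(\<lambda>A. if A \<in> M then nu M \<Omega> \<mu> A else 0) \<in> convA \<Omega> M MM"
proof -
  have 4: "(if A \<in> M then nu M \<Omega> \<mu> A else 0) = (\<Sum>n. (if n = 0 then 1 else 0) * nu M \<Omega> \<mu> A)"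
    if A: "A \<in> M" for A
  proof -
    have "nu M \<Omega> \<mu> A = (\<Sum>n. (if n = 0 then 1 else 0) * nu M \<Omega> \<mu> A)"
      by (rule sums_unique[OF sums_delta])
    then show ?thesis using A by simp
  qed
  show ?thesis
    by (rule convA_I[where \<mu> = "\<lambda>_. \<mu>" and \<alpha> = "\<lambda>n. if n = 0 then 1 else 0", OF mu _ sums_delta1 4])
      auto
qed

lemma pair_convA:
  assumes m1: "m1 \<in> convA \<Omega> M MM" and m2: "m2 \<in> convA \<Omega> M MM"
  shows "(\<lambda>A. if A \<in> M then (m1 A + m2 A) / 2 else 0) \<in> convA \<Omega> M MM"
proof -
  define mk where "mk k = (if k = (0::nat) then m1 else m2)" for k
  define \<beta> where "\<beta> k = (if k < (2::nat) then 1/2 else (0::real))" for k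
  have mk: "mk k \<in> convA \<Omega> M MM" for k using m1 m2 by (simp add: mk_def)
  have fs: "(\<lambda>k. \<beta> k * mk k A) sums ((m1 A + m2 A)/2)" for A
  proof -
    have "(\<lambda>k. \<beta> k * mk k A) sums (\<Sum>k\<in>{0,1}. \<beta> k * mk k A)"
      by (rule sums_finite) (auto simp: \<beta>_def)
    then show ?thesis by (simp add: \<beta>_def mk_def add_divide_distrib)
  qed
  have bs: "\<beta> sums 1"
  proof -
    have "\<beta> sums (\<Sum>k\<in>{0,1}. \<beta> k)" by (rule sums_finite) (auto simp: \<beta>_def)
    then show ?thesis by (simp add: \<beta>_def)
  qed
  have "(\<lambda>A. if A \<in> M then (\<Sum>k. \<beta> k * mk k A) else 0) \<in> convA \<Omega> M MM"
    using convA_comb(1)[OF MM mk _ bs] by (simp add: \<beta>_def)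
  moreover have "(\<lambda>A. if A \<in> M then (\<Sum>k. \<beta> k * mk k A) else 0) = (\<lambda>A. if A \<in> M then (m1 A + m2 A) / 2 else 0)"
    using fs by (auto simp: sums_iff)
  ultimately show ?thesis by simp
qed

end
end



context algebra begin

lemma pos_sub:
  assumes m: "m \<in> ba \<Omega> M" and nn: "\<And>A. 0 \<le> m A" and A: "A \<in> M" and B: "B \<in> M"
  shows "m (A \<union> B) \<le> m A + m B"
proof -
  have fa: "\<And>X Y. X \<in> M \<Longrightarrow> Y \<in> M \<Longrightarrow> X \<inter> Y = {} \<Longrightarrow> m (X \<union> Y) = m X + m Y"
    using m by (simp add: ba_def fin_additive_def)
  have s: "B - A \<in> M" "B \<inter> A \<in> M" using A B by auto
  have "m (A \<union> (B - A)) = m A + m (B - A)" by (rule fa[OF A s(1)]) auto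
  moreover have "m ((B - A) \<union> (B \<inter> A)) = m (B - A) + m (B \<inter> A)" by (rule fa[OF s]) auto
  moreover have "A \<union> (B - A) = A \<union> B" "(B - A) \<union> (B \<inter> A) = B" by auto
  ultimately show ?thesis using nn[of "B \<inter> A"] by simp
qed

theorem forward:
  assumes MM: "MM \<subseteq> ba_ac \<Omega> M lam" and lam: "lam \<in> ba \<Omega> M" and ne: "MM \<noteq> {}"
  shows "\<exists>m\<in>convA \<Omega> M MM. MM \<subseteq> ba_ac \<Omega> M m"
proof -
  have MMb: "MM \<subseteq> ba \<Omega> M" using MM by (auto simp: ba_ac_def)
  define ell where "ell A = tvar M lam A" for A
  define C where "C = convA \<Omega> M MM"
  define T where "T m = {t. \<exists>\<delta>>0. \<forall>A\<in>M. m A < \<delta> \<longrightarrow> ell A \<le> t}" for m :: "'a set \<Rightarrow> real"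
  define U where "U = {t. \<exists>m\<in>C. t \<in> T m}"
  have Cprops: "\<And>A. 0 \<le> m A" "m \<in> ba \<Omega> M" if "m \<in> C" for m
    using convA_props[OF MMb] that by (auto simp: C_def)
  have lmono: "ell A \<le> ell \<Omega>" if "A \<in> M" for A
    unfolding ell_def using tvar_mono[OF lam that top] sets_into_space that by auto
  obtain \<mu>0 where "\<mu>0 \<in> MM" using ne by blast
  then have m0: "(\<lambda>A. if A \<in> M then nu M \<Omega> \<mu>0 A else 0) \<in> C" unfolding C_def by (rule single_convA[OF MMb])
  have "ell \<Omega> \<in> T (\<lambda>A. if A \<in> M then nu M \<Omega> \<mu>0 A else 0)" unfolding T_def
    using lmono by (intro CollectI exI[of _ 1]) auto
  then have Une: "U \<noteq> {}" using m0 unfolding U_def by blast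
  have Ulow: "0 \<le> t" if tU: "t \<in> U" for t
  proof -
    obtain m \<delta> where m: "m \<in> C" and d: "\<delta> > 0" "\<forall>A\<in>M. m A < \<delta> \<longrightarrow> ell A \<le> t"
      using tU unfolding U_def T_def by blast
    have "m {} = 0" using Cprops(2)[OF m] by (simp add: ba_def fin_additive_def)
    then have "ell {} \<le> t" using d by auto
    then show ?thesis using tvar_empty[OF lam] by (simp add: ell_def)
  qed
  have bdd: "bdd_below U" using Ulow by (auto simp: bdd_below_def)
  define \<eta> where "\<eta> = Inf U"
  have Ulower: "\<eta> \<le> t" if "t \<in> U" for t using cInf_lower[OF that bdd] by (simp add: \<eta>_def)
  have ex: "\<forall>k::nat. \<exists>p. fst p \<in> C \<and> snd p \<in> T (fst p) \<and> snd p < \<eta> + 1 / (real k + 1)"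
  proof
    fix k :: nat
    have "Inf U < \<eta> + 1 / (real k + 1)" by (simp add: \<eta>_def)
    then obtain t where "t \<in> U" "t < \<eta> + 1 / (real k + 1)" using cInf_less_iff[OF Une bdd] by blast
    then show "\<exists>p. fst p \<in> C \<and> snd p \<in> T (fst p) \<and> snd p < \<eta> + 1 / (real k + 1)"
      unfolding U_def by auto
  qed
  obtain F where F: "\<And>k. fst (F k) \<in> C" "\<And>k. snd (F k) \<in> T (fst (F k))"
    "\<And>k::nat. snd (F k) < \<eta> + 1 / (real k + 1)"
  proof -
    from choice[OF ex] obtain F where "\<forall>k::nat. fst (F k) \<in> C \<and> snd (F k) \<in> T (fst (F k)) \<and> snd (F k) < \<eta> + 1 / (real k + 1)"
      by blast
    then show ?thesis using that by blast
  qed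
  define mk where "mk k = fst (F k)" for k
  define tk where "tk k = snd (F k)" for k
  define \<beta> where "\<beta> k = (1/2::real)^Suc k" for k
  have bs: "\<beta> sums 1" unfolding \<beta>_def by (rule power_half_series)
  have b0: "\<beta> k > 0" for k by (simp add: \<beta>_def)
  define ms where "ms = (\<lambda>A. if A \<in> M then (\<Sum>k. \<beta> k * mk k A) else 0)"
  have msC: "ms \<in> C" unfolding ms_def C_def
    by (rule convA_comb(1)[OF MMb]) (use F(1) bs b0 in \<open>auto simp: mk_def C_def less_imp_le\<close>)
  have msge: "\<beta> k * mk k A \<le> ms A" if A: "A \<in> M" for k A
  proof -
    have s: "(\<lambda>k. \<beta> k * mk k A) sums (\<Sum>k. \<beta> k * mk k A)"
      by (rule convA_comb(2)[OF MMb _ _ bs A]) (use F(1) b0 in \<open>auto simp: mk_def C_def less_imp_le\<close>)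
    have "sum (\<lambda>k. \<beta> k * mk k A) {k} \<le> (\<Sum>k. \<beta> k * mk k A)"
      by (rule sum_le_suminf) (use s Cprops(1) F(1) b0 in \<open>auto simp: sums_iff mk_def less_imp_le\<close>)
    then show ?thesis using A by (simp add: ms_def)
  qed
  have tkT: "tk k \<in> T ms" for k
  proof -
    obtain \<delta> where d: "\<delta> > 0" "\<forall>A\<in>M. mk k A < \<delta> \<longrightarrow> ell A \<le> tk k"
      using F(2)[of k] unfolding T_def mk_def tk_def by blast
    show ?thesis unfolding T_def
    proof (intro CollectI exI[of _ "\<beta> k * \<delta>"] conjI ballI impI)
      show "0 < \<beta> k * \<delta>" using b0 d by simp
      fix A assume A: "A \<in> M" and "ms A < \<beta> k * \<delta>"
      then have "\<beta> k * mk k A < \<beta> k * \<delta>" using msge[OF A, of k] by linarith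
      then have "mk k A < \<delta>" using b0[of k] by simp
      then show "ell A \<le> tk k" using d A by blast
    qed
  qed
  have msba: "ms \<in> ba \<Omega> M" and msnn: "\<And>A. 0 \<le> ms A" using Cprops msC by auto
  have "MM \<subseteq> ba_ac \<Omega> M ms"
  proof
    fix \<mu> assume mu: "\<mu> \<in> MM"
    have mub: "\<mu> \<in> ba \<Omega> M" using mu MMb by auto
    have acl: "abs_cont M \<mu> lam" using mu MM by (auto simp: ba_ac_def)
    have "abs_cont M \<mu> ms"
    proof (rule ccontr)
      assume "\<not> abs_cont M \<mu> ms"
      then have "\<exists>\<epsilon>>0. \<forall>\<delta>>0. \<exists>A\<in>M. tvar M ms A < \<delta> \<and> \<epsilon> \<le> tvar M \<mu> A"
        unfolding abs_cont_def by (simp add: not_less) (meson not_le)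
      then obtain \<epsilon> where eps: "\<epsilon> > 0" and bad0: "\<forall>\<delta>>0. \<exists>A\<in>M. tvar M ms A < \<delta> \<and> \<epsilon> \<le> tvar M \<mu> A"
        by blast
      have bad: "\<exists>A\<in>M. tvar M ms A < \<delta> \<and> \<epsilon> \<le> tvar M \<mu> A" if "\<delta> > 0" for \<delta>
        using bad0 that by blast
      have e2: "\<epsilon> / 2 > 0" using eps by simp
      obtain \<gamma> where g0: "\<gamma> > 0" "\<forall>A\<in>M. tvar M lam A < \<gamma> \<longrightarrow> tvar M \<mu> A < \<epsilon> / 2"
        using acl e2 unfolding abs_cont_def by blast
      have g: "\<gamma> > 0" "\<And>A. A \<in> M \<Longrightarrow> ell A < \<gamma> \<Longrightarrow> tvar M \<mu> A < \<epsilon> / 2"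
        using g0 by (auto simp: ell_def)
      have g2: "\<gamma> / 2 > 0" using g(1) by simp
      obtain k where k: "inverse (real (Suc k)) < \<gamma> / 2" using reals_Archimedean[OF g2] by blast
      then have k': "1 / (real k + 1) < \<gamma> / 2" by (simp add: inverse_eq_divide add.commute)
      obtain \<delta>0 where d0: "\<delta>0 > 0" "\<And>A. A \<in> M \<Longrightarrow> ms A < \<delta>0 \<Longrightarrow> ell A \<le> tk k"
        using tkT[of k] unfolding T_def by blast
      obtain B where B: "B \<in> M" "tvar M ms B < \<delta>0 / 2" "\<epsilon> \<le> tvar M \<mu> B"
        using bad[of "\<delta>0/2"] d0(1) by auto
      have msB: "ms B < \<delta>0 / 2" using B tvar_pos[OF MMb msba msnn B(1)] by simp
      define c where "c = max 1 (ba_norm \<Omega> M \<mu>)"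
      have c1: "c \<ge> 1" by (simp add: c_def)
      define m1 where "m1 = (\<lambda>A. if A \<in> M then nu M \<Omega> \<mu> A else 0)"
      have m1C: "m1 \<in> C" unfolding m1_def C_def by (rule single_convA[OF MMb mu])
      define m' where "m' = (\<lambda>A. if A \<in> M then (ms A + m1 A) / 2 else 0)"
      have m'C: "m' \<in> C" unfolding m'_def C_def using pair_convA[OF MMb msC[unfolded C_def] m1C[unfolded C_def]] .
      define \<delta> where "\<delta> = min (\<delta>0 / 4) (\<epsilon> / (4 * c))"
      have dpos: "\<delta> > 0" using d0(1) eps c1 by (simp add: \<delta>_def)
      have "tk k - \<gamma> \<in> T m'" unfolding T_def
      proof (intro CollectI exI[of _ \<delta>] conjI dpos ballI impI)
        fix A assume A: "A \<in> M" and small: "m' A < \<delta>"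
        have m1A: "m1 A = tvar M \<mu> A / c" using A by (simp add: m1_def nu_def c_def)
        have m1nn: "0 \<le> m1 A" using tvar_nn[OF mub] c1 m1A by simp
        have msA: "ms A < \<delta>0 / 2" using small A m1nn msnn[of A]
          by (simp add: m'_def \<delta>_def)
        have "tvar M \<mu> A = c * m1 A" using m1A c1 by simp
        also have "\<dots> \<le> c * (2 * m' A)" using A msnn[of A] c1 by (simp add: m'_def)
        also have "\<dots> < c * (2 * \<delta>)" using small c1 by simp
        also have "\<dots> \<le> c * (2 * (\<epsilon> / (4 * c)))" using c1 by (intro mult_left_mono) (auto simp: \<delta>_def)
        also have "\<dots> = \<epsilon> / 2" using c1 by (simp add: field_simps)
        finally have muA: "tvar M \<mu> A < \<epsilon> / 2" .
        have AB: "A \<union> B \<in> M" using A B(1) by auto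
        have "ms (A \<union> B) \<le> ms A + ms B" by (rule pos_sub[OF msba msnn A B(1)])
        then have "ms (A \<union> B) < \<delta>0" using msA msB by linarith
        then have lAB: "ell (A \<union> B) \<le> tk k" using d0(2) AB by blast
        have BA: "B - A \<in> M" "B \<inter> A \<in> M" using A B(1) by auto
        have "tvar M \<mu> B = tvar M \<mu> (B - A) + tvar M \<mu> (B \<inter> A)"
        proof -
          have "(B - A) \<inter> (B \<inter> A) = {}" by blast
          from tvar_add[OF mub BA this] show ?thesis by (simp add: Un_Diff_Int)
        qed
        moreover have "tvar M \<mu> (B \<inter> A) \<le> tvar M \<mu> A" using tvar_mono[OF mub BA(2) A] by auto
        ultimately have "tvar M \<mu> (B - A) \<ge> \<epsilon> / 2" using B(3) muA by linarith
        then have "\<not> ell (B - A) < \<gamma>" using g(2)[OF BA(1)] by linarith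
        moreover have "ell (A \<union> B) = ell A + ell (B - A)"
          using tvar_add[OF lam A BA(1)] by (simp add: ell_def)
        ultimately show "ell A \<le> tk k - \<gamma>" using lAB by linarith
      qed
      then have "tk k - \<gamma> \<in> U" using m'C unfolding U_def by blast
      then have "\<eta> \<le> tk k - \<gamma>" by (rule Ulower)
      moreover have "tk k < \<eta> + 1 / (real k + 1)" using F(3) by (simp add: tk_def)
      ultimately show False using k' g(1) by linarith
    qed
    then show "\<mu> \<in> ba_ac \<Omega> M ms" using mub by (simp add: ba_ac_def)
  qed
  then show ?thesis using msC unfolding C_def by blast
qed

end


theorem mainTheorem14:
  fixes \<Omega> :: "'a set" and \<A> :: "'a set set" and \<M> :: "('a set \<Rightarrow> real) set"
  assumes "algebra \<Omega> \<A>"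
    and "\<M> \<subseteq> ba \<Omega> \<A>"
    and "\<M> \<noteq> {}"
  shows "(\<exists>lam\<in>ba \<Omega> \<A>. \<M> \<subseteq> ba_ac \<Omega> \<A> lam) \<longleftrightarrow> (\<exists>m\<in>convA \<Omega> \<A> \<M>. \<M> \<subseteq> ba_ac \<Omega> \<A> m)"
proof -
  interpret algebra \<Omega> \<A> by (rule assms(1))
  show ?thesis
  proof
    assume "\<exists>lam\<in>ba \<Omega> \<A>. \<M> \<subseteq> ba_ac \<Omega> \<A> lam"
    then obtain lam where "lam \<in> ba \<Omega> \<A>" "\<M> \<subseteq> ba_ac \<Omega> \<A> lam" by blast
    then show "\<exists>m\<in>convA \<Omega> \<A> \<M>. \<M> \<subseteq> ba_ac \<Omega> \<A> m"
      using forward assms(3) by blast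
  next
    assume "\<exists>m\<in>convA \<Omega> \<A> \<M>. \<M> \<subseteq> ba_ac \<Omega> \<A> m"
    then obtain m where m: "m \<in> convA \<Omega> \<A> \<M>" "\<M> \<subseteq> ba_ac \<Omega> \<A> m" by blast
    have "m \<in> ba \<Omega> \<A>" by (rule convA_props(4)[OF assms(2) m(1)])
    then show "\<exists>lam\<in>ba \<Omega> \<A>. \<M> \<subseteq> ba_ac \<Omega> \<A> lam" using m(2) by blast
  qed
qed

end
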